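(* Let $f:\{-1,1\}^n\to\{-1,1\}$ be a boolean function, $V_1\subsetneq[n]$, $k\in[n]\setminus V_1$, $V_2=V_1\cup\{k\}$, $\epsilon\in(0,\tfrac12)$, and suppose $I_k(f)>0$. For $x\in\{-1,1\}^n$ and $S\subseteq V_1$ set $a_{x,S}=\min\{\widehat{f_{V_2^c\to x}}(S)^2,\widehat{f_{V_2^c\to x}}(S\cup\{k\})^2\}$ and $b_{x,S}=\max\{\widehat{f_{V_2^c\to x}}(S)^2,\widehat{f_{V_2^c\to x}}(S\cup\{k\})^2\}$. Then $$\mathbb{E}_x\sum_{S\subseteq V_1}(b_{x,S}^\epsilon-a_{x,S}^\epsilon)\,a_{x,S}\le I_k(f)\Big(\Big(\frac{I_k(f)}{4}\Big)^{-\epsilon}-1\Big),$$ with $x$ uniform on $\{-1,1\}^n$ and the convention $0^\epsilon\cdot 0=0$.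
   Context: $\mu_k$ flips the $k$-th coordinate; $I_k(f)=\mathbb{P}_x[f(x)\neq f(\mu_k(x))]$. For $J\subseteq[n]$ and $x\in\{-1,1\}^n$, the restriction $f_{J^c\to x}:\{-1,1\}^J\to\{-1,1\}$ is $f_{J^c\to x}(y)=f(z)$ with $z_i=y_i$ for $i\in J$ and $z_i=x_i$ for $i\notin J$; $\widehat{f_{J^c\to x}}(S)=\mathbb{E}_y[f_{J^c\to x}(y)\prod_{i\in S}y_i]$ for $S\subseteq J$, $y$ uniform on $\{-1,1\}^J$. *)

theory Defs
  imports Complex_Main "HOL-Library.FuncSet"
begin

text \<open>Coordinates are indexed by {0..<n} (standing for [n]). A point of the cube
  {-1,1}^J is a function in PiE J (\<lambda>_. {-1,1}) (value undefined off J).\<close>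

definition cube :: "nat set \<Rightarrow> (nat \<Rightarrow> real) set" where
  "cube J = PiE J (\<lambda>_. {-1, 1})"

definition flip :: "nat \<Rightarrow> (nat \<Rightarrow> real) \<Rightarrow> (nat \<Rightarrow> real)" where
  "flip k x = x(k := - x k)"

definition is_boolean :: "nat \<Rightarrow> ((nat \<Rightarrow> real) \<Rightarrow> real) \<Rightarrow> bool" where
  "is_boolean n f \<longleftrightarrow> (\<forall>x\<in>cube {0..<n}. f x = -1 \<or> f x = 1)"

definition influence :: "nat \<Rightarrow> ((nat \<Rightarrow> real) \<Rightarrow> real) \<Rightarrow> nat \<Rightarrow> real" where
  "influence n f k = real (card {x \<in> cube {0..<n}. f x \<noteq> f (flip k x)}) / 2 ^ n"

definition glue :: "nat set \<Rightarrow> (nat \<Rightarrow> real) \<Rightarrow> (nat \<Rightarrow> real) \<Rightarrow> (nat \<Rightarrow> real)" where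
  "glue J y x = (\<lambda>i. if i \<in> J then y i else x i)"

text \<open>Fourier coefficient of the restriction f_{J^c -> x} at S \<subseteq> J.\<close>
definition restr_coeff ::
  "((nat \<Rightarrow> real) \<Rightarrow> real) \<Rightarrow> nat set \<Rightarrow> (nat \<Rightarrow> real) \<Rightarrow> nat set \<Rightarrow> real" where
  "restr_coeff f J x S =
     (\<Sum>y\<in>cube J. f (glue J y x) * (\<Prod>i\<in>S. y i)) / 2 ^ card J"

end

theory Submission imports Defs "HOL-Analysis.Analysis" begin

definition chi :: "nat set \<Rightarrow> (nat \<Rightarrow> real) \<Rightarrow> real" where
  "chi T y = (\<Prod>i\<in>T. y i)"

definition coef :: "nat set \<Rightarrow> ((nat \<Rightarrow> real) \<Rightarrow> real) \<Rightarrow> nat set \<Rightarrow> real" where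
  "coef J G T = (\<Sum>y\<in>cube J. G y * chi T y) / 2 ^ card J"

lemma finite_cube: "finite J \<Longrightarrow> finite (cube J)"
  unfolding cube_def by (simp add: finite_PiE)

lemma card_cube: "finite J \<Longrightarrow> card (cube J) = 2 ^ card J"
  unfolding cube_def by (simp add: card_PiE numeral_2_eq_2)

lemma cube_val: "y \<in> cube J \<Longrightarrow> i \<in> J \<Longrightarrow> y i = -1 \<or> y i = 1"
  unfolding cube_def by auto

lemma cube_sq: "y \<in> cube J \<Longrightarrow> i \<in> J \<Longrightarrow> y i * y i = 1"
  using cube_val by fastforce

lemma chi_sq: "y \<in> cube J \<Longrightarrow> T \<subseteq> J \<Longrightarrow> chi T y * chi T y = 1"
proof -
  assume y: "y \<in> cube J" and T: "T \<subseteq> J"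
  have "chi T y * chi T y = (\<Prod>i\<in>T. y i * y i)"
    unfolding chi_def by (simp add: prod.distrib)
  also have "\<dots> = (\<Prod>i\<in>T. 1)"
    using cube_sq[OF y] T by (intro prod.cong) auto
  finally show ?thesis by simp
qed

lemma abs_chi: "y \<in> cube J \<Longrightarrow> T \<subseteq> J \<Longrightarrow> \<bar>chi T y\<bar> = 1"
proof -
  assume "y \<in> cube J" "T \<subseteq> J"
  then have "chi T y * chi T y = 1" by (rule chi_sq)
  then have "chi T y = 1 \<or> chi T y = -1" by (simp add: square_eq_1_iff)
  then show ?thesis by auto
qed

lemma sum_pow_chi:
  assumes J: "finite J" and y: "y \<in> cube J" and z: "z \<in> cube J"
  shows "(\<Sum>T\<in>Pow J. chi T y * chi T z) = (if y = z then 2 ^ card J else 0)"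
proof -
  have "(\<Sum>T\<in>Pow J. chi T y * chi T z) = (\<Sum>T\<in>Pow J. (\<Prod>i\<in>T. y i * z i) * (\<Prod>i\<in>J-T. 1))"
    unfolding chi_def by (simp add: prod.distrib)
  also have "\<dots> = (\<Prod>i\<in>J. y i * z i + 1)"
    using prod_add[OF J, of "\<lambda>i. y i * z i" "\<lambda>i. 1"] by simp
  also have "\<dots> = (if y = z then 2 ^ card J else 0)"
  proof (cases "y = z")
    case True
    have "(\<Prod>i\<in>J. y i * z i + 1) = (\<Prod>i\<in>J. 2)"
      using cube_sq[OF y] True by (intro prod.cong) auto
    then show ?thesis using True by simp
  next
    case False
    then obtain i where i: "i \<in> J" "y i \<noteq> z i"
      using y z unfolding cube_def by (metis PiE_ext)
    then have "y i * z i + 1 = 0" using cube_val[OF y i(1)] cube_val[OF z i(1)] by auto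
    then have "(\<Prod>i\<in>J. y i * z i + 1) = 0" using i J by (meson prod_zero)
    then show ?thesis using False by simp
  qed
  finally show ?thesis .
qed

lemma parseval:
  assumes J: "finite J"
  shows "(\<Sum>T\<in>Pow J. (coef J G T)\<^sup>2) = (\<Sum>y\<in>cube J. (G y)\<^sup>2) / 2 ^ card J"
proof -
  let ?c = "(2::real) ^ card J"
  have c: "?c > 0" by simp
  have "(\<Sum>T\<in>Pow J. (coef J G T)\<^sup>2)
      = (\<Sum>T\<in>Pow J. (\<Sum>y\<in>cube J. \<Sum>z\<in>cube J. G y * G z * (chi T y * chi T z)) / ?c\<^sup>2)"
    unfolding coef_def power2_eq_square
    by (intro sum.cong refl) (simp add: sum_product algebra_simps)
  also have "\<dots> = (\<Sum>y\<in>cube J. \<Sum>z\<in>cube J. G y * G z * (\<Sum>T\<in>Pow J. chi T y * chi T z)) / ?c\<^sup>2"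
    by (simp add: sum_divide_distrib[symmetric] sum_distrib_left sum.swap[of _ "Pow J"])
  also have "\<dots> = (\<Sum>y\<in>cube J. \<Sum>z\<in>cube J. if y = z then G y * G z * ?c else 0) / ?c\<^sup>2"
    using sum_pow_chi[OF J] by (intro arg_cong[where f="\<lambda>t. t / _"] sum.cong refl) auto
  also have "\<dots> = (\<Sum>y\<in>cube J. G y * G y * ?c) / ?c\<^sup>2"
    using finite_cube[OF J] by (simp add: sum.delta)
  also have "\<dots> = (\<Sum>y\<in>cube J. (G y)\<^sup>2) / ?c"
    by (simp add: sum_distrib_right[symmetric] power2_eq_square)
  finally show ?thesis .
qed

lemma flip_flip[simp]: "flip k (flip k y) = y"
  unfolding flip_def by auto

lemma flip_cube: "k \<in> J \<Longrightarrow> y \<in> cube J \<Longrightarrow> flip k y \<in> cube J"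
  unfolding flip_def cube_def by (auto simp: PiE_iff extensional_def)

lemma sum_flip:
  assumes "k \<in> J"
  shows "(\<Sum>y\<in>cube J. F (flip k y)) = (\<Sum>y\<in>cube J. F y)"
  by (rule sum.reindex_bij_witness[of _ "flip k" "flip k"]) (use assms flip_cube in auto)

lemma chi_flip:
  assumes "finite T" "k \<in> T"
  shows "chi T (flip k y) = - chi T y"
proof -
  have "chi T (flip k y) = flip k y k * (\<Prod>i\<in>T-{k}. flip k y i)"
    unfolding chi_def using assms by (simp add: prod.remove)
  also have "(\<Prod>i\<in>T-{k}. flip k y i) = (\<Prod>i\<in>T-{k}. y i)"
    by (intro prod.cong) (auto simp: flip_def)
  also have "chi T y = y k * (\<Prod>i\<in>T-{k}. y i)"
    unfolding chi_def using assms by (simp add: prod.remove)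
  moreover have "flip k y k = - y k" by (simp add: flip_def)
  ultimately show ?thesis by simp
qed

lemma chi_insert:
  assumes "finite S" "k \<notin> S"
  shows "chi (insert k S) y = y k * chi S y"
  unfolding chi_def using assms by simp

lemma sum_coord:
  assumes "k \<in> J"
  shows "(\<Sum>y\<in>cube J. y k) = 0"
proof -
  have "(\<Sum>y\<in>cube J. flip k y k) = (\<Sum>y\<in>cube J. y k)"
    using sum_flip[OF assms, of "\<lambda>y. y k"] by simp
  then have "(\<Sum>y\<in>cube J. - y k) = (\<Sum>y\<in>cube J. y k)"
    by (simp add: flip_def)
  then show ?thesis by (simp add: sum_negf)
qed

lemma coef_D:
  assumes J: "finite J" and T: "T \<subseteq> J" "k \<in> T"
  shows "coef J (\<lambda>y. (G y - G (flip k y)) / 2) T = coef J G T"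
proof -
  have fT: "finite T" using J T finite_subset by blast
  have kJ: "k \<in> J" using T by auto
  have "(\<Sum>y\<in>cube J. G (flip k y) * chi T y) = (\<Sum>y\<in>cube J. G (flip k (flip k y)) * chi T (flip k y))"
    using sum_flip[OF kJ, of "\<lambda>y. G (flip k y) * chi T y"] by simp
  also have "\<dots> = - (\<Sum>y\<in>cube J. G y * chi T y)"
    using chi_flip[OF fT T(2)] by (simp add: sum_negf)
  finally have *: "(\<Sum>y\<in>cube J. G (flip k y) * chi T y) = - (\<Sum>y\<in>cube J. G y * chi T y)" .
  have "(\<Sum>y\<in>cube J. (G y - G (flip k y)) / 2 * chi T y)
      = ((\<Sum>y\<in>cube J. G y * chi T y) - (\<Sum>y\<in>cube J. G (flip k y) * chi T y)) / 2"
    by (simp add: sum_subtractf[symmetric] sum_divide_distrib algebra_simps)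
  also have "\<dots> = (\<Sum>y\<in>cube J. G y * chi T y)" using * by simp
  finally show ?thesis unfolding coef_def by simp
qed

lemma sum_abs_aux:
  assumes J: "finite J" and k: "k \<in> J" and S: "S \<subseteq> J" and s: "s = 1 \<or> s = -1"
    and G: "\<And>y. y \<in> cube J \<Longrightarrow> \<bar>G y\<bar> \<le> 1"
  shows "\<bar>\<Sum>y\<in>cube J. G y * chi S y * (1 + s * y k)\<bar> \<le> 2 ^ card J"
proof -
  have "\<bar>\<Sum>y\<in>cube J. G y * chi S y * (1 + s * y k)\<bar> \<le> (\<Sum>y\<in>cube J. \<bar>G y * chi S y * (1 + s * y k)\<bar>)"
    by (rule sum_abs)
  also have "\<dots> \<le> (\<Sum>y\<in>cube J. 1 + s * y k)"
  proof (rule sum_mono)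
    fix y assume y: "y \<in> cube J"
    have a: "\<bar>chi S y\<bar> = 1" using abs_chi[OF y S] .
    have b: "1 + s * y k \<ge> 0" using cube_val[OF y k] s by auto
    have "\<bar>G y * chi S y * (1 + s * y k)\<bar> = \<bar>G y\<bar> * (1 + s * y k)"
      using a b by (simp add: abs_mult)
    also have "\<dots> \<le> 1 * (1 + s * y k)" using G[OF y] b by (intro mult_right_mono) auto
    finally show "\<bar>G y * chi S y * (1 + s * y k)\<bar> \<le> 1 + s * y k" by simp
  qed
  also have "\<dots> = 2 ^ card J"
    using sum_coord[OF k] card_cube[OF J] by (simp add: sum.distrib sum_distrib_left[symmetric])
  finally show ?thesis .
qed

lemma coef_abs_pair:
  assumes J: "finite J" and k: "k \<in> J" and S: "S \<subseteq> J" "k \<notin> S"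
    and G: "\<And>y. y \<in> cube J \<Longrightarrow> \<bar>G y\<bar> \<le> 1"
  shows "\<bar>coef J G S\<bar> + \<bar>coef J G (insert k S)\<bar> \<le> 1"
proof -
  have fS: "finite S" using J S finite_subset by blast
  let ?c = "(2::real) ^ card J"
  have e: "coef J G S + s * coef J G (insert k S) = (\<Sum>y\<in>cube J. G y * chi S y * (1 + s * y k)) / ?c" for s
  proof -
    have "(\<Sum>y\<in>cube J. G y * chi S y * (1 + s * y k)) = (\<Sum>y\<in>cube J. G y * chi S y) + s * (\<Sum>y\<in>cube J. G y * (y k * chi S y))"
      by (simp add: sum.distrib sum_distrib_left algebra_simps)
    then show ?thesis unfolding coef_def chi_insert[OF fS S(2)] by (simp add: add_divide_distrib)
  qed
  have "\<bar>coef J G S + s * coef J G (insert k S)\<bar> \<le> 1" if "s = 1 \<or> s = -1" for s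
  proof -
    have "\<bar>coef J G S + s * coef J G (insert k S)\<bar> = \<bar>\<Sum>y\<in>cube J. G y * chi S y * (1 + s * y k)\<bar> / ?c"
      unfolding e by simp
    also have "\<dots> \<le> ?c / ?c"
      using sum_abs_aux[OF J k S(1) that G] by (intro divide_right_mono) auto
    finally show ?thesis by simp
  qed
  from this[of 1] this[of "-1"] show ?thesis by linarith
qed

lemma glue_flip: "k \<in> V \<Longrightarrow> glue V (flip k y) x = flip k (glue V y x)"
  unfolding glue_def flip_def by auto

lemma glue_cube:
  assumes "V \<subseteq> {0..<n}" "y \<in> cube V" "x \<in> cube {0..<n}"
  shows "glue V y x \<in> cube {0..<n}"
  using assms unfolding cube_def glue_def by (auto simp: PiE_iff extensional_def)

lemma sum_glue:
  fixes P :: "(nat \<Rightarrow> real) \<Rightarrow> real"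
  assumes V: "V \<subseteq> {0..<n}"
  shows "(\<Sum>x\<in>cube {0..<n}. \<Sum>y\<in>cube V. P (glue V y x)) = 2 ^ card V * (\<Sum>z\<in>cube {0..<n}. P z)"
proof -
  have fV: "finite V" by (rule finite_subset[OF V]) simp
  have "(\<Sum>x\<in>cube {0..<n}. \<Sum>y\<in>cube V. P (glue V y x))
      = (\<Sum>(x,y)\<in>cube {0..<n} \<times> cube V. P (glue V y x))"
    by (simp add: sum.cartesian_product)
  also have "\<dots> = (\<Sum>(z,w)\<in>cube {0..<n} \<times> cube V. P z)"
  proof (rule sum.reindex_bij_witness[of _ "\<lambda>(z,w). (glue V w z, restrict z V)"
                                        "\<lambda>(x,y). (glue V y x, restrict x V)"])
    fix a assume a: "a \<in> cube {0..<n} \<times> cube V"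
    then obtain x y where xy: "a = (x,y)" "x \<in> cube {0..<n}" "y \<in> cube V" by auto
    have "restrict (glue V y x) V = y"
      using xy(3) unfolding cube_def glue_def by (auto simp: PiE_iff extensional_def restrict_def)
    moreover have "glue V (restrict x V) (glue V y x) = x"
      unfolding glue_def by auto
    ultimately show "(case case a of (x, y) \<Rightarrow> (glue V y x, restrict x V) of
          (z, w) \<Rightarrow> (glue V w z, restrict z V)) = a" using xy by simp
    show "(case a of (x, y) \<Rightarrow> (glue V y x, restrict x V)) \<in> cube {0..<n} \<times> cube V"
      using xy glue_cube[OF V xy(3,2)] V by (auto simp: cube_def)
    show "(case case a of (x, y) \<Rightarrow> (glue V y x, restrict x V) of (z, w) \<Rightarrow> P z) =
         (case a of (x, y) \<Rightarrow> P (glue V y x))" using xy by simp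
  next
    fix b assume b: "b \<in> cube {0..<n} \<times> cube V"
    then obtain z w where zw: "b = (z,w)" "z \<in> cube {0..<n}" "w \<in> cube V" by auto
    have "restrict (glue V w z) V = w"
      using zw(3) unfolding cube_def glue_def by (auto simp: PiE_iff extensional_def restrict_def)
    moreover have "glue V (restrict z V) (glue V w z) = z"
      unfolding glue_def by auto
    ultimately show "(case case b of (z, w) \<Rightarrow> (glue V w z, restrict z V) of
          (x, y) \<Rightarrow> (glue V y x, restrict x V)) = b" using zw by simp
    show "(case b of (z, w) \<Rightarrow> (glue V w z, restrict z V)) \<in> cube {0..<n} \<times> cube V"
      using zw glue_cube[OF V zw(3,2)] V by (auto simp: cube_def)
  qed
  also have "\<dots> = real (card (cube V)) * (\<Sum>z\<in>cube {0..<n}. P z)"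
    by (simp add: sum.cartesian_product[symmetric] sum.swap[of _ "cube {0..<n}"] sum_distrib_left)
  also have "\<dots> = 2 ^ card V * (\<Sum>z\<in>cube {0..<n}. P z)"
    using card_cube[OF fV] by simp
  finally show ?thesis .
qed

lemma four_powr_ge: "0 \<le> e \<Longrightarrow> 1 + e \<le> (4::real) powr e"
proof -
  assume e: "0 \<le> e"
  have "1 \<le> ln (4::real)" using exp_le by (subst ln_ge_iff) auto
  then have "e \<le> e * ln 4" using e by (simp add: mult_le_cancel_left1)
  also have "1 + e * ln 4 \<le> exp (e * ln 4)" by (rule exp_ge_add_one_self)
  finally show ?thesis by (simp add: powr_def mult.commute)
qed

lemma scalar_ineq:
  fixes A I e :: real
  assumes A: "0 < A" "A \<le> I" and I: "I \<le> 1" and e: "0 < e" "e < 1/2"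
  shows "4 powr (-e) * (A powr (1-e) - A) \<le> I * ((I/4) powr (-e) - 1)"
proof -
  have I0: "0 < I" using A by linarith
  define u where "u = (4::real) powr e"
  define q where "q = I powr e"
  have u1: "1 + e \<le> u" unfolding u_def using four_powr_ge e by simp
  have u0: "0 < u" using u1 e by linarith
  have q0: "0 < q" unfolding q_def using I0 by simp
  have q1: "q \<le> 1" unfolding q_def using I0 I e by (intro powr_le1) auto
  have inv: "4 powr (-e) = 1 / u" unfolding u_def by (simp add: powr_minus divide_inverse)
  have Iq: "I powr (1-e) = I / q" unfolding q_def using I0 by (simp add: powr_diff)
  have rhs: "I * ((I/4) powr (-e) - 1) = u * (I / q) - I"
    unfolding u_def q_def using I0 by (simp add: powr_divide powr_minus field_simps)
  have young: "A powr (1-e) * q \<le> (1-e) * A + e * I"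
    unfolding q_def using Youngs_inequality_0[of "1-e" e A I] A I0 e by simp
  have Aq: "A powr (1-e) \<le> ((1-e) * A + e * I) / q"
    using young q0 by (simp add: pos_le_divide_eq)
  have IIq: "I \<le> I / q" using I0 q0 q1 by (simp add: le_divide_eq)
  have key: "A powr (1-e) - A \<le> A * ((1-e)/q - 1) + e * (I / q)"
    using Aq q0 by (simp add: field_simps)
  show ?thesis
  proof (cases "(1-e)/q - 1 \<ge> 0")
    case True
    have "A * ((1-e)/q - 1) \<le> I * ((1-e)/q - 1)" using True A by (intro mult_right_mono) auto
    moreover have "I * ((1-e)/q - 1) + e * (I / q) = I / q - I" using q0 by (simp add: field_simps)
    ultimately have "A powr (1-e) - A \<le> I / q - I" using key by linarith
    then have "1/u * (A powr (1-e) - A) \<le> 1/u * (I / q - I)" using u0 by (intro mult_left_mono) auto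
    also have "\<dots> \<le> u * (I / q) - I"
    proof -
      have "(1 - 1/u) * I \<le> (u - 1/u) * (I / q)"
      proof (rule mult_mono)
        show "1 - 1/u \<le> u - 1/u" using u1 e by linarith
        show "0 \<le> u - 1/u" using u1 e u0 by (simp add: field_simps) (smt (verit) mult_le_cancel_left1)
        show "0 \<le> I" using I0 by simp
      qed (rule IIq)
      then show ?thesis by (simp add: algebra_simps)
    qed
    finally show ?thesis using inv rhs by simp
  next
    case False
    have "A * ((1-e)/q - 1) \<le> 0" using False A by (intro mult_nonneg_nonpos) auto
    with key have "A powr (1-e) - A \<le> e * (I / q)" by linarith
    then have "1/u * (A powr (1-e) - A) \<le> 1/u * (e * (I / q))" using u0 by (intro mult_left_mono) auto
    also have "\<dots> \<le> u * (I / q) - I"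
    proof -
      have "e / u \<le> e" using u0 u1 e by (simp add: field_simps)
      then have "1 \<le> u - e / u" using u1 by linarith
      then have "1 * I \<le> (u - e / u) * (I / q)"
        using IIq I0 by (intro mult_mono) auto
      then show ?thesis by (simp add: algebra_simps)
    qed
    finally show ?thesis using inv rhs by simp
  qed
qed

lemma term_bound:
  fixes a b e :: real
  assumes "0 \<le> a" "a \<le> b" "a \<le> 1/4" "0 < e"
  shows "(b powr e - a powr e) * a \<le> 4 powr (-e) * (a powr (1-e) * b powr e - a)"
proof (cases "a = 0")
  case True then show ?thesis by simp
next
  case False
  then have a0: "0 < a" using assms by simp
  have sp: "a powr e * a powr (1-e) = a" using a0 by (simp add: powr_add[symmetric])
  have "(b powr e - a powr e) * a = a powr e * (a powr (1-e) * b powr e - a)"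
    using sp by (simp add: algebra_simps powr_add[symmetric])
  also have "\<dots> \<le> 4 powr (-e) * (a powr (1-e) * b powr e - a)"
  proof (rule mult_right_mono)
    have "a powr e \<le> (1/4) powr e" using assms a0 by (intro powr_mono2) auto
    also have "(1/4::real) powr e = 4 powr (-e)" by (subst powr_divide) (auto simp: powr_minus_divide)
    finally show "a powr e \<le> 4 powr (-e)" .
    have "a powr (1-e) * a powr e \<le> a powr (1-e) * b powr e"
      using assms a0 by (intro mult_left_mono powr_mono2) auto
    then show "0 \<le> a powr (1-e) * b powr e - a" using sp by (simp add: mult.commute)
  qed
  finally show ?thesis .
qed

lemma young_term:
  fixes a b e A B :: real
  assumes "0 \<le> a" "a \<le> b" "0 < A" "0 < B" "0 < e" "e < 1"
  shows "a powr (1-e) * b powr e \<le> A powr (1-e) * B powr e * ((1-e) * (a / A) + e * (b / B))"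
proof (cases "a = 0")
  case True
  have "0 \<le> A powr (1-e) * B powr e * ((1-e) * (a / A) + e * (b / B))"
    using assms by (intro mult_nonneg_nonneg add_nonneg_nonneg) auto
  then show ?thesis using True by simp
next
  case False
  then have a0: "0 < a" "0 < b" using assms by auto
  have "a powr (1-e) * b powr e = A powr (1-e) * B powr e * ((a/A) powr (1-e) * (b/B) powr e)"
    using a0 assms by (simp add: powr_divide field_simps)
  also have "\<dots> \<le> A powr (1-e) * B powr e * ((1-e) * (a / A) + e * (b / B))"
    using a0 assms by (intro mult_left_mono Youngs_inequality_0) auto
  finally show ?thesis .
qed

lemma restr_coef: "restr_coeff f J x T = coef J (\<lambda>y. f (glue J y x)) T"
  unfolding restr_coeff_def coef_def chi_def by simp

lemma g_vals:
  assumes "is_boolean n f" "V \<subseteq> {0..<n}" "x \<in> cube {0..<n}" "y \<in> cube V"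
  shows "f (glue V y x) = -1 \<or> f (glue V y x) = 1"
  using assms glue_cube unfolding is_boolean_def by blast

lemma px_abs:
  assumes bool: "is_boolean n f" and V: "insert k V1 \<subseteq> {0..<n}" and kV: "k \<notin> V1"
    and x: "x \<in> cube {0..<n}" and S: "S \<subseteq> V1"
  shows "\<bar>restr_coeff f (insert k V1) x S\<bar> + \<bar>restr_coeff f (insert k V1) x (insert k S)\<bar> \<le> 1"
  unfolding restr_coef
proof (rule coef_abs_pair)
  show "finite (insert k V1)" by (rule finite_subset[OF V]) simp
  show "\<bar>f (glue (insert k V1) y x)\<bar> \<le> 1" if "y \<in> cube (insert k V1)" for y
    using g_vals[OF bool V x that] by auto
qed (use S kV in auto)

lemma pow_split:
  fixes F :: "nat set \<Rightarrow> real"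
  assumes "finite V1" "k \<notin> V1"
  shows "(\<Sum>T\<in>Pow (insert k V1). F T) = (\<Sum>S\<in>Pow V1. F S + F (insert k S))"
proof -
  have inj: "inj_on (insert k) (Pow V1)"
    using assms by (auto simp: inj_on_def)
  have "(\<Sum>T\<in>Pow (insert k V1). F T) = (\<Sum>T\<in>Pow V1. F T) + (\<Sum>T\<in>insert k ` Pow V1. F T)"
    unfolding Pow_insert using assms by (intro sum.union_disjoint) auto
  also have "(\<Sum>T\<in>insert k ` Pow V1. F T) = (\<Sum>S\<in>Pow V1. F (insert k S))"
    using inj by (simp add: sum.reindex)
  finally show ?thesis by (simp add: sum.distrib)
qed

lemma px_parseval:
  assumes bool: "is_boolean n f" and V: "insert k V1 \<subseteq> {0..<n}" and kV: "k \<notin> V1"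
    and x: "x \<in> cube {0..<n}"
  shows "(\<Sum>S\<in>Pow V1. (restr_coeff f (insert k V1) x S)\<^sup>2 + (restr_coeff f (insert k V1) x (insert k S))\<^sup>2) = 1"
proof -
  let ?V = "insert k V1"
  have fV: "finite ?V" by (rule finite_subset[OF V]) simp
  have "(\<Sum>S\<in>Pow V1. (restr_coeff f ?V x S)\<^sup>2 + (restr_coeff f ?V x (insert k S))\<^sup>2)
      = (\<Sum>T\<in>Pow ?V. (restr_coeff f ?V x T)\<^sup>2)"
    using pow_split[of V1 k "\<lambda>T. (restr_coeff f ?V x T)\<^sup>2"] fV kV by simp
  also have "\<dots> = (\<Sum>y\<in>cube ?V. (f (glue ?V y x))\<^sup>2) / 2 ^ card ?V"
    unfolding restr_coef by (rule parseval[OF fV])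
  also have "(\<Sum>y\<in>cube ?V. (f (glue ?V y x))\<^sup>2) = (\<Sum>y\<in>cube ?V. 1)"
  proof (intro sum.cong refl)
    fix y assume "y \<in> cube ?V"
    then have "f (glue ?V y x) = -1 \<or> f (glue ?V y x) = 1" by (rule g_vals[OF bool V x])
    then show "(f (glue ?V y x))\<^sup>2 = 1" by auto
  qed
  also have "\<dots> = 2 ^ card ?V" using card_cube[OF fV] by simp
  finally show ?thesis by simp
qed

lemma px_infl:
  assumes bool: "is_boolean n f" and V: "insert k V1 \<subseteq> {0..<n}" and kV: "k \<notin> V1"
    and x: "x \<in> cube {0..<n}"
  shows "(\<Sum>S\<in>Pow V1. (restr_coeff f (insert k V1) x (insert k S))\<^sup>2)
     \<le> (\<Sum>y\<in>cube (insert k V1). if f (glue (insert k V1) y x) \<noteq> f (flip k (glue (insert k V1) y x)) then 1 else 0)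
        / 2 ^ card (insert k V1)"
proof -
  let ?V = "insert k V1"
  let ?g = "\<lambda>y. f (glue ?V y x)"
  let ?D = "\<lambda>y. (?g y - ?g (flip k y)) / 2"
  have fV: "finite ?V" by (rule finite_subset[OF V]) simp
  have kin: "k \<in> ?V" by simp
  have inj: "inj_on (insert k) (Pow V1)"
    using kV by (auto simp: inj_on_def)
  have "(\<Sum>S\<in>Pow V1. (restr_coeff f ?V x (insert k S))\<^sup>2) = (\<Sum>S\<in>Pow V1. (coef ?V ?D (insert k S))\<^sup>2)"
    unfolding restr_coef
  proof (intro sum.cong refl)
    fix S assume "S \<in> Pow V1"
    then have "insert k S \<subseteq> ?V" by auto
    from coef_D[OF fV this, of k ?g] show "(coef ?V ?g (insert k S))\<^sup>2 = (coef ?V ?D (insert k S))\<^sup>2" by simp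
  qed
  also have "\<dots> = (\<Sum>T\<in>insert k ` Pow V1. (coef ?V ?D T)\<^sup>2)"
    using inj by (simp add: sum.reindex)
  also have "\<dots> \<le> (\<Sum>T\<in>Pow ?V. (coef ?V ?D T)\<^sup>2)"
    using fV by (intro sum_mono2) auto
  also have "\<dots> = (\<Sum>y\<in>cube ?V. (?D y)\<^sup>2) / 2 ^ card ?V"
    by (rule parseval[OF fV])
  also have "(\<Sum>y\<in>cube ?V. (?D y)\<^sup>2) = (\<Sum>y\<in>cube ?V. if f (glue ?V y x) \<noteq> f (flip k (glue ?V y x)) then 1 else 0)"
  proof (intro sum.cong refl)
    fix y assume y: "y \<in> cube ?V"
    have fy: "flip k y \<in> cube ?V" using flip_cube[OF kin y] .
    have e: "?g (flip k y) = f (flip k (glue ?V y x))" using glue_flip[OF kin] by simp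
    show "(?D y)\<^sup>2 = (if f (glue ?V y x) \<noteq> f (flip k (glue ?V y x)) then 1 else 0)"
      using g_vals[OF bool V x y] g_vals[OF bool V x fy] e by (auto simp: power2_eq_square)
  qed
  finally show ?thesis .
qed

theorem mainTheorem8:
  fixes n :: nat and f :: "(nat \<Rightarrow> real) \<Rightarrow> real" and V1 :: "nat set"
    and k :: nat and eps :: real
  assumes "is_boolean n f"
    and "V1 \<subset> {0..<n}"
    and "k \<in> {0..<n} - V1"
    and "0 < eps" and "eps < 1/2"
    and "influence n f k > 0"
  shows "(\<Sum>x\<in>cube {0..<n}. \<Sum>S\<in>Pow V1.
            (let V2 = insert k V1;
                 c0 = (restr_coeff f V2 x S)\<^sup>2;
                 c1 = (restr_coeff f V2 x (insert k S))\<^sup>2;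
                 a = min c0 c1; b = max c0 c1
             in (b powr eps - a powr eps) * a)) / 2 ^ n
         \<le> influence n f k * ((influence n f k / 4) powr (- eps) - 1)"
proof -
  note bool = assms(1)
  let ?X = "cube {0..<n}"
  let ?V = "insert k V1"
  define r where "r x T = restr_coeff f ?V x T" for x T
  define a where "a x S = min ((r x S)\<^sup>2) ((r x (insert k S))\<^sup>2)" for x S
  define b where "b x S = max ((r x S)\<^sup>2) ((r x (insert k S))\<^sup>2)" for x S
  define I where "I = influence n f k"
  define M where "M = (2::real) ^ n"
  define P where "P z = (if f z \<noteq> f (flip k z) then 1 else 0::real)" for z
  have V: "?V \<subseteq> {0..<n}" using assms(2,3) by auto
  have kV: "k \<notin> V1" using assms(3) by auto
  have fV1: "finite V1" by (rule finite_subset[of _ "{0..<n}"]) (use assms(2) in auto)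
  have fV: "finite ?V" using fV1 by simp
  have fX: "finite ?X" by (rule finite_cube) simp
  have M0: "M > 0" unfolding M_def by simp
  have e: "0 < eps" "eps < 1" using assms(4,5) by auto
  have I0: "0 < I" unfolding I_def using assms(6) .
  have cardX: "card ?X = 2 ^ n" using card_cube[of "{0..<n}"] by simp
  have sumP: "(\<Sum>z\<in>?X. P z) = M * I"
  proof -
    have "(\<Sum>z\<in>?X. P z) = real (card {z\<in>?X. f z \<noteq> f (flip k z)})"
      unfolding P_def using fX by (simp add: sum.If_cases Int_def)
    then show ?thesis unfolding I_def influence_def M_def by simp
  qed
  have I1: "I \<le> 1"
  proof -
    have "(\<Sum>z\<in>?X. P z) \<le> (\<Sum>z\<in>?X. 1)" unfolding P_def by (intro sum_mono) auto
    then have "M * I \<le> M * 1" using sumP cardX M_def by simp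
    then show ?thesis using M0 by simp
  qed
  have LHS: "(\<Sum>x\<in>?X. \<Sum>S\<in>Pow V1.
            (let V2 = insert k V1;
                 c0 = (restr_coeff f V2 x S)\<^sup>2;
                 c1 = (restr_coeff f V2 x (insert k S))\<^sup>2;
                 a = min c0 c1; b = max c0 c1
             in (b powr eps - a powr eps) * a))
       = (\<Sum>x\<in>?X. \<Sum>S\<in>Pow V1. (b x S powr eps - a x S powr eps) * a x S)"
    by (simp add: Let_def a_def b_def r_def)
  have a0: "0 \<le> a x S" for x S unfolding a_def by simp
  have ab: "a x S \<le> b x S" for x S unfolding a_def b_def by simp
  have a4: "a x S \<le> 1/4" if x: "x \<in> ?X" and S: "S \<in> Pow V1" for x S
  proof -
    have h: "\<bar>r x S\<bar> + \<bar>r x (insert k S)\<bar> \<le> 1"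
      unfolding r_def using px_abs[OF bool V kV x] S by auto
    show ?thesis
    proof (cases "\<bar>r x S\<bar> \<le> 1/2")
      case True
      have "(r x S)\<^sup>2 = \<bar>r x S\<bar> * \<bar>r x S\<bar>" by (simp add: power2_eq_square)
      also have "\<dots> \<le> (1/2) * (1/2)" using True by (intro mult_mono) auto
      finally show ?thesis unfolding a_def by simp
    next
      case False
      then have "\<bar>r x (insert k S)\<bar> \<le> 1/2" using h by linarith
      then have "\<bar>r x (insert k S)\<bar> * \<bar>r x (insert k S)\<bar> \<le> (1/2) * (1/2)" by (intro mult_mono) auto
      then have "(r x (insert k S))\<^sup>2 \<le> 1/4" by (simp add: power2_eq_square)
      then show ?thesis unfolding a_def by simp
    qed
  qed
  have SB: "(\<Sum>x\<in>?X. \<Sum>S\<in>Pow V1. b x S) \<le> M"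
  proof -
    have "(\<Sum>x\<in>?X. \<Sum>S\<in>Pow V1. b x S) \<le> (\<Sum>x\<in>?X. 1)"
    proof (rule sum_mono)
      fix x assume x: "x \<in> ?X"
      have "(\<Sum>S\<in>Pow V1. b x S) \<le> (\<Sum>S\<in>Pow V1. (r x S)\<^sup>2 + (r x (insert k S))\<^sup>2)"
        unfolding b_def by (intro sum_mono) auto
      also have "\<dots> = 1" unfolding r_def by (rule px_parseval[OF bool V kV x])
      finally show "(\<Sum>S\<in>Pow V1. b x S) \<le> 1" .
    qed
    then show ?thesis using cardX M_def by simp
  qed
  have SA: "(\<Sum>x\<in>?X. \<Sum>S\<in>Pow V1. a x S) \<le> M * I"
  proof -
    have "(\<Sum>x\<in>?X. \<Sum>S\<in>Pow V1. a x S) \<le> (\<Sum>x\<in>?X. (\<Sum>y\<in>cube ?V. P (glue ?V y x)) / 2 ^ card ?V)"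
    proof (rule sum_mono)
      fix x assume x: "x \<in> ?X"
      have "(\<Sum>S\<in>Pow V1. a x S) \<le> (\<Sum>S\<in>Pow V1. (r x (insert k S))\<^sup>2)"
        unfolding a_def by (intro sum_mono) auto
      also have "\<dots> \<le> (\<Sum>y\<in>cube ?V. P (glue ?V y x)) / 2 ^ card ?V"
        unfolding r_def P_def by (rule px_infl[OF bool V kV x])
      finally show "(\<Sum>S\<in>Pow V1. a x S) \<le> (\<Sum>y\<in>cube ?V. P (glue ?V y x)) / 2 ^ card ?V" .
    qed
    also have "\<dots> = (\<Sum>x\<in>?X. \<Sum>y\<in>cube ?V. P (glue ?V y x)) / 2 ^ card ?V"
      by (simp add: sum_divide_distrib)
    also have "\<dots> = M * I"
      using sum_glue[OF V, of P] sumP by simp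
    finally show ?thesis .
  qed
  have termb: "(b x S powr eps - a x S powr eps) * a x S \<le> 4 powr (-eps) * (a x S powr (1-eps) * b x S powr eps - a x S)"
    if "x \<in> ?X" "S \<in> Pow V1" for x S
    using term_bound[OF a0 ab a4[OF that] e(1)] .
  define SAv where "SAv = (\<Sum>x\<in>?X. \<Sum>S\<in>Pow V1. a x S)"
  define SBv where "SBv = (\<Sum>x\<in>?X. \<Sum>S\<in>Pow V1. b x S)"
  have step1: "(\<Sum>x\<in>?X. \<Sum>S\<in>Pow V1. (b x S powr eps - a x S powr eps) * a x S)
      \<le> 4 powr (-eps) * ((\<Sum>x\<in>?X. \<Sum>S\<in>Pow V1. a x S powr (1-eps) * b x S powr eps) - SAv)"
  proof -
    have "(\<Sum>x\<in>?X. \<Sum>S\<in>Pow V1. (b x S powr eps - a x S powr eps) * a x S)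
      \<le> (\<Sum>x\<in>?X. \<Sum>S\<in>Pow V1. 4 powr (-eps) * (a x S powr (1-eps) * b x S powr eps - a x S))"
      using termb by (intro sum_mono) auto
    also have "\<dots> = 4 powr (-eps) * ((\<Sum>x\<in>?X. \<Sum>S\<in>Pow V1. a x S powr (1-eps) * b x S powr eps) - SAv)"
      unfolding SAv_def by (simp add: sum_distrib_left sum_subtractf right_diff_distrib)
    finally show ?thesis .
  qed
  have RHS: "I * ((I/4) powr (-eps) - 1) = influence n f k * ((influence n f k / 4) powr (- eps) - 1)"
    unfolding I_def ..
  show ?thesis
  proof (cases "SAv = 0")
    case True
    have "\<forall>x\<in>?X. (\<Sum>S\<in>Pow V1. a x S) = 0"
      using True unfolding SAv_def by (subst (asm) sum_nonneg_eq_0_iff[OF fX]) (auto intro: sum_nonneg a0)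
    then have az: "a x S = 0" if "x \<in> ?X" "S \<in> Pow V1" for x S
      using that fV1 a0 by (simp add: sum_nonneg_eq_0_iff)
    have "(\<Sum>x\<in>?X. \<Sum>S\<in>Pow V1. a x S powr (1-eps) * b x S powr eps) = 0"
      using az by (intro sum.neutral ballI) simp
    then have L0: "(\<Sum>x\<in>?X. \<Sum>S\<in>Pow V1. (b x S powr eps - a x S powr eps) * a x S) \<le> 0"
      using step1 True by simp
    have "(I/4) powr eps \<le> 1" using I0 I1 e by (intro powr_le1) auto
    moreover have "0 < (I/4) powr eps" using I0 by simp
    ultimately have "1 \<le> (I/4) powr (-eps)" by (simp add: powr_minus_divide)
    then have R0: "0 \<le> I * ((I/4) powr (-eps) - 1)" using I0 by simp
    have "(\<Sum>x\<in>?X. \<Sum>S\<in>Pow V1. (b x S powr eps - a x S powr eps) * a x S) / 2 ^ n \<le> 0"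
      using L0 by (intro divide_nonpos_pos) auto
    then show ?thesis unfolding LHS using R0 RHS by linarith
  next
    case False
    have SA0: "0 < SAv" using False a0 unfolding SAv_def
      by (metis (no_types, lifting) order_le_less sum_nonneg)
    have SBA: "SAv \<le> SBv" unfolding SAv_def SBv_def using ab by (intro sum_mono) auto
    have SB0: "0 < SBv" using SA0 SBA by linarith
    have hold: "(\<Sum>x\<in>?X. \<Sum>S\<in>Pow V1. a x S powr (1-eps) * b x S powr eps) \<le> SAv powr (1-eps) * SBv powr eps"
    proof -
      have "(\<Sum>x\<in>?X. \<Sum>S\<in>Pow V1. a x S powr (1-eps) * b x S powr eps)
          \<le> (\<Sum>x\<in>?X. \<Sum>S\<in>Pow V1. SAv powr (1-eps) * SBv powr eps * ((1-eps) * (a x S / SAv) + eps * (b x S / SBv)))"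
        using young_term[OF a0 ab SA0 SB0 e] by (intro sum_mono) auto
      also have "\<dots> = (\<Sum>x\<in>?X. \<Sum>S\<in>Pow V1. (SAv powr (1-eps) * SBv powr eps * (1-eps) / SAv) * a x S
                   + (SAv powr (1-eps) * SBv powr eps * eps / SBv) * b x S)"
        by (intro sum.cong refl) (simp add: divide_inverse algebra_simps)
      also have "\<dots> = (SAv powr (1-eps) * SBv powr eps * (1-eps) / SAv) * SAv
                   + (SAv powr (1-eps) * SBv powr eps * eps / SBv) * SBv"
        unfolding SAv_def SBv_def by (simp add: sum.distrib sum_distrib_left)
      also have "\<dots> = SAv powr (1-eps) * SBv powr eps" using SA0 SB0 by (simp add: field_simps)
      finally show ?thesis .
    qed
    have "SBv powr eps \<le> M powr eps" using SB0 SB e unfolding SBv_def by (intro powr_mono2) auto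
    then have hold2: "(\<Sum>x\<in>?X. \<Sum>S\<in>Pow V1. a x S powr (1-eps) * b x S powr eps) \<le> SAv powr (1-eps) * M powr eps"
      using hold SA0 by (meson order_trans mult_left_mono powr_ge_zero)
    define A where "A = SAv / M"
    have A0: "0 < A" unfolding A_def using SA0 M0 by simp
    have AI: "A \<le> I" unfolding A_def using SA M0 unfolding SAv_def by (simp add: divide_le_eq mult.commute)
    have eqA: "(SAv powr (1-eps) * M powr eps - SAv) / M = A powr (1-eps) - A"
    proof -
      have "M powr eps / M = 1 / M powr (1 - eps)" using M0 by (simp add: powr_diff)
      then have "SAv powr (1-eps) * M powr eps / M = SAv powr (1-eps) / M powr (1-eps)"
        by (metis times_divide_eq_right mult.right_neutral)
      moreover have "(SAv / M) powr (1-eps) = SAv powr (1-eps) / M powr (1-eps)"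
        using M0 SA0 by (simp add: powr_divide)
      ultimately show ?thesis unfolding A_def by (simp add: diff_divide_distrib)
    qed
    have "(\<Sum>x\<in>?X. \<Sum>S\<in>Pow V1. (b x S powr eps - a x S powr eps) * a x S) / M
        \<le> 4 powr (-eps) * (SAv powr (1-eps) * M powr eps - SAv) / M"
      using step1 hold2 M0 by (intro divide_right_mono order_trans[OF step1] mult_left_mono) auto
    also have "\<dots> = 4 powr (-eps) * (A powr (1-eps) - A)" by (metis eqA times_divide_eq_right)
    also have "\<dots> \<le> I * ((I/4) powr (-eps) - 1)" using scalar_ineq[OF A0 AI I1 assms(4,5)] .
    finally show ?thesis using LHS RHS M_def by simp
  qed
qed

end
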